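(* Let $m,n\ge0$ be integers with $m+n$ even. A permutation $x=(x_1x_2\cdots x_{m+n})$ of $[m+n]$ is an alternating $\mathcal B_{m,n}$-permutation if and only if $x\in\mathrm{Alt}_{\mathrm{Hoch}(m,n)}$.
   Context: For integers $i\le j$, $[i,j]=\{\ell\in\mathbb Z: i\le\ell\le j\}$ and $[N]=[1,N]$. $\mathcal B_{m,n}$ is the collection of nonempty subsets $I\subseteq[m+n]$ such that whenever $|I|\ge2$, $I\cap[m+1,m+n]$ is either $\emptyset$ or $[m+r,m+n]$ for some $1\le r\le n$ (a building set on $[m+n]$). For a building set $\mathcal B$ on $S$ (collection of nonempty subsets of $S$ containing all singletons, closed under unions of intersecting members; its connected components are its inclusion-maximal members; $\mathcal B|_I=\{J\in\mathcal B:J\subseteq I\}$) with $|S|=N$, a $\mathcal B$-permutation is a sequence $(x_1\cdots x_N)$ listing each element of $S$ once such that for each $i$, $x_i$ and $\max\{x_1,\dots,x_i\}$ lie in the same connected component of $\mathcal B|_{\{x_1,\dots,x_i\}}$; it is alternating if $x_1>x_2<x_3>\cdots$. $\mathrm{Alt}_{\mathrm{Hoch}(m,n)}$ is the set of alternating permutations $(x_1\cdots x_{m+n})$ of $[m+n]$ such that for all $i,j$: $m+n\ge x_i>x_j\ge m+1$ implies $i<j$. *)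

theory Defs
  imports Main
begin

definition restrict_bs :: "'a set set \<Rightarrow> 'a set \<Rightarrow> 'a set set" where
  "restrict_bs B I = {J \<in> B. J \<subseteq> I}"

text \<open>Connected components: the inclusion-maximal members.\<close>
definition components_bs :: "'a set set \<Rightarrow> 'a set set" where
  "components_bs B = {C \<in> B. \<forall>D\<in>B. C \<subseteq> D \<longrightarrow> D = C}"

text \<open>B-permutation of the ground set S, written as a list (x_1 ... x_N), 0-indexed.\<close>
definition is_B_perm :: "'a::linorder set set \<Rightarrow> 'a set \<Rightarrow> 'a list \<Rightarrow> bool" where
  "is_B_perm B S xs \<longleftrightarrow> distinct xs \<and> set xs = S \<and>
     (\<forall>i < length xs. \<exists>C \<in> components_bs (restrict_bs B (set (take (Suc i) xs))).
        xs ! i \<in> C \<and> Max (set (take (Suc i) xs)) \<in> C)"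

text \<open>Alternating: x_1 > x_2 < x_3 > ... (0-indexed: even positions descend).\<close>
definition alternating :: "'a::linorder list \<Rightarrow> bool" where
  "alternating xs \<longleftrightarrow> (\<forall>i. Suc i < length xs \<longrightarrow>
     (if even i then xs ! i > xs ! Suc i else xs ! i < xs ! Suc i))"

definition B_mn :: "nat \<Rightarrow> nat \<Rightarrow> nat set set" where
  "B_mn m n = {I. I \<noteq> {} \<and> I \<subseteq> {1..m+n} \<and>
     (card I \<ge> 2 \<longrightarrow> I \<inter> {m+1..m+n} = {} \<or>
        (\<exists>r. 1 \<le> r \<and> r \<le> n \<and> I \<inter> {m+1..m+n} = {m+r..m+n}))}"

definition Alt_Hoch :: "nat \<Rightarrow> nat \<Rightarrow> nat list set" where
  "Alt_Hoch m n = {xs. distinct xs \<and> set xs = {1..m+n} \<and> alternating xs \<and>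
     (\<forall>i < length xs. \<forall>j < length xs.
        m + n \<ge> xs ! i \<and> xs ! i > xs ! j \<and> xs ! j \<ge> m + 1 \<longrightarrow> i < j)}"

end

theory Submission
  imports Defs
begin

lemma inB_mn:
  assumes "A \<noteq> {}" "A \<subseteq> {1..m+n}"
    "A \<inter> {m+1..m+n} = {} \<or> (\<exists>r. 1 \<le> r \<and> r \<le> n \<and> A \<inter> {m+1..m+n} = {m+r..m+n})"
  shows "A \<in> B_mn m n"
  using assms unfolding B_mn_def by auto

lemma comp_char:
  fixes m n :: nat and P :: "nat set"
  assumes P: "P \<subseteq> {1..m+n}" and xP: "x \<in> P"
  shows "(\<exists>C\<in>components_bs (restrict_bs (B_mn m n) P). x\<in>C \<and> Max P \<in> C) \<longleftrightarrow>
     (x = Max P \<or> Max P \<le> m \<or> (Max P = m+n \<and> (x \<le> m \<or> {x..m+n} \<subseteq> P)))"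
proof -
  have fin: "finite P" using P finite_subset by blast
  have MP: "Max P \<in> P" using fin xP Max_in by blast
  have xle: "x \<le> Max P" using fin xP by simp
  have Mle: "Max P \<le> m+n" using MP P by auto
  show ?thesis
  proof
    assume "\<exists>C\<in>components_bs (restrict_bs (B_mn m n) P). x\<in>C \<and> Max P \<in> C"
    then obtain C where C: "C \<in> B_mn m n" "C \<subseteq> P" "x \<in> C" "Max P \<in> C"
      unfolding components_bs_def restrict_bs_def by blast
    show "x = Max P \<or> Max P \<le> m \<or> (Max P = m+n \<and> (x \<le> m \<or> {x..m+n} \<subseteq> P))"
    proof (cases "x = Max P")
      case False
      have finC: "finite C" using C(2) fin finite_subset by blast
      have "card {x, Max P} \<le> card C" using C finC by (intro card_mono) auto
      then have c2: "card C \<ge> 2" using False by simp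
      have CB: "C \<subseteq> {1..m+n}" "C \<inter> {m+1..m+n} = {} \<or> (\<exists>r. 1 \<le> r \<and> r \<le> n \<and> C \<inter> {m+1..m+n} = {m+r..m+n})"
        using C(1) c2 unfolding B_mn_def by auto
      from CB(2) show ?thesis
      proof
        assume "C \<inter> {m+1..m+n} = {}"
        then have "Max P \<le> m" using C(4) CB(1) by (metis IntI atLeastAtMost_iff empty_iff not_less_eq_eq subsetD Suc_eq_plus1)
        then show ?thesis by simp
      next
        assume "\<exists>r. 1 \<le> r \<and> r \<le> n \<and> C \<inter> {m+1..m+n} = {m+r..m+n}"
        then obtain r where r: "1 \<le> r" "r \<le> n" "C \<inter> {m+1..m+n} = {m+r..m+n}" by blast
        have "m+n \<in> C" using r by auto
        then have "m+n \<le> Max P" using C(2) fin by (meson Max_ge subsetD)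
        then have MN: "Max P = m+n" using Mle by simp
        have "x \<le> m \<or> {x..m+n} \<subseteq> P"
        proof (cases "x \<le> m")
          case False
          then have "x \<in> C \<inter> {m+1..m+n}" using C(3) CB(1) by auto
          then have "x \<in> {m+r..m+n}" using r(3) by (metis)
          then have "{x..m+n} \<subseteq> C" using r(3) by auto
          then show ?thesis using C(2) by auto
        qed simp
        then show ?thesis using MN by simp
      qed
    qed simp
  next
    assume H: "x = Max P \<or> Max P \<le> m \<or> (Max P = m+n \<and> (x \<le> m \<or> {x..m+n} \<subseteq> P))"
    have "\<exists>A. A \<in> restrict_bs (B_mn m n) P \<and> x \<in> A \<and> Max P \<in> A"
    proof -
      consider (a) "x = Max P" | (b) "Max P \<le> m" | (c) "Max P = m+n" "x \<le> m" "\<not> Max P \<le> m"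
        | (d) "Max P = m+n" "{x..m+n} \<subseteq> P" "\<not> x \<le> m" using H by blast
      then show ?thesis
      proof cases
        case a
        have "{x} \<in> B_mn m n" using xP P unfolding B_mn_def by auto
        then show ?thesis using a xP unfolding restrict_bs_def by auto
      next
        case b
        have "{x, Max P} \<in> B_mn m n" using xP P MP b xle by (intro inB_mn) auto
        then show ?thesis using xP MP unfolding restrict_bs_def by auto
      next
        case c
        have "{x, Max P} \<inter> {m+1..m+n} = {m+n..m+n}" using c by auto
        then have "{x, Max P} \<in> B_mn m n" using xP P MP c by (intro inB_mn) (auto intro!: exI[of _ n])
        then show ?thesis using xP MP unfolding restrict_bs_def by auto
      next
        case d
        have xl: "x \<le> m+n" using xP P by auto
        have "{x..m+n} \<inter> {m+1..m+n} = {m+(x-m)..m+n}" using d by auto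
        then have "{x..m+n} \<in> B_mn m n" using xP P d xl
          by (intro inB_mn) (auto intro!: exI[of _ "x-m"])
        then show ?thesis using d xl unfolding restrict_bs_def by auto
      qed
    qed
    then obtain A where A: "A \<in> restrict_bs (B_mn m n) P" "x \<in> A" "Max P \<in> A" by blast
    have "finite (restrict_bs (B_mn m n) P)"
      using fin unfolding restrict_bs_def by (rule finite_subset[rotated, OF finite_Pow_iff[THEN iffD2]]) auto
    from finite_has_maximal2[OF this A(1)] obtain D where
      D: "D \<in> restrict_bs (B_mn m n) P" "A \<subseteq> D" "\<forall>E\<in>restrict_bs (B_mn m n) P. D \<subseteq> E \<longrightarrow> D = E"
      by blast
    have "D \<in> components_bs (restrict_bs (B_mn m n) P)"
      using D unfolding components_bs_def by auto
    then show "\<exists>C\<in>components_bs (restrict_bs (B_mn m n) P). x\<in>C \<and> Max P \<in> C"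
      using A D by blast
  qed
qed

theorem proposition6p1:
  fixes m n :: nat and xs :: "nat list"
  assumes "even (m + n)"
    and "distinct xs" and "set xs = {1..m+n}"
  shows "(alternating xs \<and> is_B_perm (B_mn m n) {1..m+n} xs) \<longleftrightarrow> xs \<in> Alt_Hoch m n"
proof -
  note dist = assms(2) and setx = assms(3)
  define P where "P = (\<lambda>i. set (take (Suc i) xs))"
  define cond where "cond = (\<lambda>i. xs!i = Max (P i) \<or> Max (P i) \<le> m \<or>
      (Max (P i) = m+n \<and> (xs!i \<le> m \<or> {xs!i..m+n} \<subseteq> P i)))"
  have len: "length xs = m+n" using distinct_card[OF dist] setx by simp
  have Psub: "\<And>i. P i \<subseteq> {1..m+n}" unfolding P_def using setx set_take_subset by metis
  have xin: "\<And>i. i < length xs \<Longrightarrow> xs!i \<in> P i"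
    unfolding P_def by (simp add: take_Suc_conv_app_nth)
  have memP: "\<And>i y. i < length xs \<Longrightarrow> y \<in> P i \<longleftrightarrow> (\<exists>k\<le>i. xs!k = y)"
    unfolding P_def by (auto simp: in_set_conv_nth less_Suc_eq_le)
  have finP: "\<And>i. finite (P i)" unfolding P_def by simp
  have nthin: "\<And>k. k < length xs \<Longrightarrow> xs!k \<in> {1..m+n}" using setx nth_mem by blast
  have inxs: "\<And>y. y \<in> {1..m+n} \<Longrightarrow> \<exists>q<length xs. xs!q = y"
    using setx by (metis in_set_conv_nth)
  have Bchar: "is_B_perm (B_mn m n) {1..m+n} xs \<longleftrightarrow> (\<forall>i<length xs. cond i)"
    using comp_char[OF Psub xin] dist setx unfolding is_B_perm_def cond_def P_def by simp
  have Hoch: "xs \<in> Alt_Hoch m n \<longleftrightarrow> alternating xs \<and> (\<forall>i < length xs. \<forall>j < length xs.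
        m + n \<ge> xs ! i \<and> xs ! i > xs ! j \<and> xs ! j \<ge> m + 1 \<longrightarrow> i < j)"
    unfolding Alt_Hoch_def using dist setx by simp
  show ?thesis
  proof
    assume L: "alternating xs \<and> is_B_perm (B_mn m n) {1..m+n} xs"
    then have alt: "alternating xs" and C: "\<And>i. i < length xs \<Longrightarrow> cond i" using Bchar by auto
    have step1: "\<exists>p<j. xs!p = m+n" if j: "j < length xs" "xs!j > m" "xs!j \<noteq> m+n" for j
    proof (rule ccontr)
      assume nop: "\<not> (\<exists>p<j. xs!p = m+n)"
      define j0 where "j0 = (LEAST j. j < length xs \<and> xs!j > m)"
      have j0: "j0 < length xs" "xs!j0 > m" unfolding j0_def using LeastI[of "\<lambda>j. j < length xs \<and> xs!j > m" j] j by auto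
      have j0le: "j0 \<le> j" unfolding j0_def using Least_le[of "\<lambda>j. j < length xs \<and> xs!j > m" j] j by auto
      have below: "\<And>k. k < j0 \<Longrightarrow> xs!k \<le> m"
        using not_less_Least j0(1) j0_def by (metis leI less_trans)
      have a_ne: "xs!j0 \<noteq> m+n"
      proof (cases "j0 = j")
        case False then show ?thesis using nop j0le by auto
      qed (use j in auto)
      have "m+n \<in> {1..m+n}" using nthin[OF j(1)] j(2) by auto
      then obtain p where p: "p < length xs" "xs!p = m+n" using inxs by blast
      have "p > j0"
      proof -
        have "p \<noteq> j0" using p a_ne by auto
        moreover have "\<not> p < j0" using below p j0 nthin[OF j0(1)] a_ne by fastforce
        ultimately show ?thesis by simp
      qed
      then have j1: "Suc j0 < length xs" using p by simp
      have gt: "xs!(Suc j0) > xs!j0"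
      proof (rule ccontr)
        assume "\<not> xs!(Suc j0) > xs!j0"
        moreover have "xs!(Suc j0) \<noteq> xs!j0" using dist j1 by (simp add: nth_eq_iff_index_eq)
        ultimately have lt: "xs!(Suc j0) < xs!j0" by simp
        have "Max (P (Suc j0)) = xs!j0"
        proof (rule Max_eqI[OF finP])
          show "xs!j0 \<in> P (Suc j0)" using memP[OF j1] le_Suc_eq by blast
          fix y assume "y \<in> P (Suc j0)"
          then obtain k where k: "k \<le> Suc j0" "xs!k = y" using memP[OF j1] by blast
          show "y \<le> xs!j0"
          proof (cases "k < j0")
            case True then show ?thesis using below k j0 by fastforce
          next
            case False then have "k = j0 \<or> k = Suc j0" using k by auto
            then show ?thesis using k lt by auto
          qed
        qed
        then show False using C[OF j1] lt j0 a_ne unfolding cond_def by auto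
      qed
      have "\<not> even j0" using alt gt j1 unfolding alternating_def by (metis not_less_iff_gr_or_eq)
      then obtain k where k: "j0 = Suc k" by (metis even_zero not0_implies_Suc)
      then have "even k" using \<open>\<not> even j0\<close> by simp
      then have "xs!k > xs!j0" using alt j0(1) k unfolding alternating_def by auto
      moreover have "xs!k \<le> m" using below k by simp
      ultimately show False using j0 by simp
    qed
    have "\<forall>i < length xs. \<forall>j < length xs.
        m + n \<ge> xs ! i \<and> xs ! i > xs ! j \<and> xs ! j \<ge> m + 1 \<longrightarrow> i < j"
    proof (intro allI impI)
      fix i j assume i: "i < length xs" and j: "j < length xs"
        and h: "m + n \<ge> xs ! i \<and> xs ! i > xs ! j \<and> xs ! j \<ge> m + 1"
      show "i < j"
      proof (rule ccontr)
        assume "\<not> i < j"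
        then have ji: "j < i" using h by (cases "i = j") auto
        obtain p where p: "p < j" "xs!p = m+n" using step1[OF j] h by auto
        have "m+n \<in> P j" using memP[OF j] p less_imp_le by blast
        then have "m+n \<le> Max (P j)" using finP by simp
        moreover have "Max (P j) \<in> P j" using xin[OF j] finP Max_in by blast
        ultimately have M: "Max (P j) = m+n" using Psub by fastforce
        have "{xs!j..m+n} \<subseteq> P j" using C[OF j] M h unfolding cond_def by auto
        then have "xs!i \<in> P j" using h by auto
        then obtain k where "k \<le> j" "xs!k = xs!i" using memP[OF j] by blast
        then have "k = i" using dist i j by (simp add: nth_eq_iff_index_eq)
        then show False using \<open>k \<le> j\<close> ji by simp
      qed
    qed
    then show "xs \<in> Alt_Hoch m n" using Hoch alt by simp
  next
    assume R: "xs \<in> Alt_Hoch m n"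
    then have alt: "alternating xs" and H: "\<And>i j. i < length xs \<Longrightarrow> j < length xs \<Longrightarrow>
        m + n \<ge> xs ! i \<Longrightarrow> xs ! i > xs ! j \<Longrightarrow> xs ! j \<ge> m + 1 \<Longrightarrow> i < j"
      using Hoch by auto
    have "cond i" if i: "i < length xs" for i
    proof -
      have MP: "Max (P i) \<in> P i" using xin[OF i] finP Max_in by blast
      then obtain k where k: "k \<le> i" "xs!k = Max (P i)" using memP[OF i] by blast
      have kl: "k < length xs" using k i by simp
      show ?thesis
      proof (cases "Max (P i) \<le> m")
        case False
        have Mle: "Max (P i) \<le> m+n" using MP Psub by fastforce
        have MN: "Max (P i) = m+n"
        proof (rule ccontr)
          assume "Max (P i) \<noteq> m+n"
          then have lt: "Max (P i) < m+n" using Mle by simp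
          have "m+n \<in> {1..m+n}" using lt by auto
          then obtain p where p: "p < length xs" "xs!p = m+n" using inxs by blast
          have "p < k" using H[OF p(1) kl] p k lt False by auto
          then have "m+n \<in> P i" using memP[OF i] p k by (meson le_trans less_imp_le)
          then have "m+n \<le> Max (P i)" using finP by simp
          then show False using lt by simp
        qed
        show ?thesis
        proof (cases "xs!i \<le> m")
          case False
          have "{xs!i..m+n} \<subseteq> P i"
          proof
            fix y assume y: "y \<in> {xs!i..m+n}"
            have "xs!i \<ge> 1" using nthin[OF i] by simp
            then have "y \<in> {1..m+n}" using y by auto
            then obtain q where q: "q < length xs" "xs!q = y" using inxs by blast
            show "y \<in> P i"
            proof (cases "q \<le> i")
              case True then show ?thesis using memP[OF i] q by auto
            next
              case False
              then have "xs!q \<noteq> xs!i" using dist q \<open>i < length xs\<close> by (metis nth_eq_iff_index_eq order_refl)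
              then have "xs!q > xs!i" using q y by auto
              then have "q < i" using H[OF q(1) i] q y \<open>\<not> xs!i \<le> m\<close> by auto
              then show ?thesis using False by simp
            qed
          qed
          then show ?thesis unfolding cond_def using MN by simp
        qed (simp add: cond_def MN)
      qed (simp add: cond_def)
    qed
    then show "alternating xs \<and> is_B_perm (B_mn m n) {1..m+n} xs" using Bchar alt by simp
  qed
qed

end
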